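(* For an integer $m\ge 0$ let $\mathbf{S}_m=\{1,\dots,m\}^2$ (empty for $m=0$). Two squares $(i,j),(i',j')$ are said to be on a common diagonal if $i-j=i'-j'$ or $i+j=i'+j'$. Let $R_{\mathbf{W}}(m,k)$ be the number of $k$-element subsets of $\{(i,j)\in\mathbf{S}_m: i+j \text{ even}\}$ with no two distinct elements on a common diagonal, and let $R_{\mathbf{K}}(m,k)$ be the analogous number for $\{(i,j)\in\mathbf{S}_m: i+j\text{ odd}\}$ (i.e., nonattacking placements of $k$ bishops on the white, resp. black, squares). Let $\pi(m)=1$ if $m$ is odd and $0$ otherwise. Then, for all integers $m\ge 1$ and $k\ge 1$, $$R_{\mathbf{W}}(m,k)=R_{\mathbf{W}}(m-1,k)+(m-k+\pi(m))R_{\mathbf{W}}(m-1,k-1),$$ $$R_{\mathbf{K}}(m,k)=R_{\mathbf{K}}(m-1,k)+(m-k+1-\pi(m))R_{\mathbf{K}}(m-1,k-1),$$ with $R_{\mathbf{W}}(m,0)=R_{\mathbf{K}}(m,0)=1$ and $R_{\mathbf{W}}(0,k)=R_{\mathbf{K}}(0,k)=\delta_{k0}$; moreover, for all integers $m,k\ge 0$, $$R_{\mathbf{W}}(m,k)=\sum_{j=0}^{k}\binom{\lceil m/2\rceil}{j}\left\{ {m-j \atop m-k}\right\},\qquad R_{\mathbf{K}}(m,k)=\sum_{j=0}^{k}\binom{\lfloor m/2\rfloor}{j}\left\{ {m-j \atop m-k}\right\}.$$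
   Context: $\delta_{ij}$ is the Kronecker delta. The Stirling numbers of the second kind $\left\{ {n \atop r}\right\}$ are used in the extended sense for all integers $n,r$: for $n,r\ge 0$ they are the usual Stirling numbers of the second kind; for $n,r\le 0$, $\left\{ {n \atop r}\right\}=\left[{-r \atop -n}\right]$, the unsigned Stirling number of the first kind; and $\left\{ {n \atop r}\right\}=0$ when one of $n,r$ is positive and the other negative. (Equivalently, the unique extension satisfying $\left\{ {n \atop r}\right\}=r\left\{ {n-1 \atop r}\right\}+\left\{ {n-1 \atop r-1}\right\}$ for all integers, as in Knuth's convention.) Binomial coefficients $\binom{x}{j}$ with integer $j\ge0$ are $x(x-1)\cdots(x-j+1)/j!$. *)

theory Defs
  imports Complex_Main "HOL-Combinatorics.Stirling"
begin

text \<open>Extended Stirling numbers of the second kind on all integers (Knuth's convention).\<close>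
definition ext_Stirling :: "int \<Rightarrow> int \<Rightarrow> int" where
  "ext_Stirling n r =
     (if 0 \<le> n \<and> 0 \<le> r then int (Stirling (nat n) (nat r))
      else if n \<le> 0 \<and> r \<le> 0 then int (stirling (nat (- r)) (nat (- n)))
      else 0)"

definition board :: "nat \<Rightarrow> (nat \<times> nat) set" where
  "board m = {1..m} \<times> {1..m}"

definition common_diag :: "nat \<times> nat \<Rightarrow> nat \<times> nat \<Rightarrow> bool" where
  "common_diag p q \<longleftrightarrow>
     int (fst p) - int (snd p) = int (fst q) - int (snd q) \<or> fst p + snd p = fst q + snd q"

definition nonattacking :: "(nat \<times> nat) set \<Rightarrow> bool" where
  "nonattacking A \<longleftrightarrow> (\<forall>p\<in>A. \<forall>q\<in>A. p \<noteq> q \<longrightarrow> \<not> common_diag p q)"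

definition white :: "nat \<Rightarrow> (nat \<times> nat) set" where
  "white m = {(i, j) \<in> board m. even (i + j)}"

definition black :: "nat \<Rightarrow> (nat \<times> nat) set" where
  "black m = {(i, j) \<in> board m. odd (i + j)}"

definition RW :: "nat \<Rightarrow> nat \<Rightarrow> nat" where
  "RW m k = card {A. A \<subseteq> white m \<and> card A = k \<and> nonattacking A}"

definition RK :: "nat \<Rightarrow> nat \<Rightarrow> nat" where
  "RK m k = card {A. A \<subseteq> black m \<and> card A = k \<and> nonattacking A}"

definition parity :: "nat \<Rightarrow> int" where
  "parity m = (if odd m then 1 else 0)"

end

theory Submission
  imports Defs
begin

definition addcol :: "int \<Rightarrow> (nat \<Rightarrow> int) \<Rightarrow> nat \<Rightarrow> int" where
  "addcol h f k = (if k = 0 then f 0 else f k + (h - int k + 1) * f (k - 1))"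

definition delta :: "nat \<Rightarrow> int" where "delta k = (if k = 0 then 1 else 0)"

lemma addcol_swap: "addcol b (addcol a f) = addcol (a + 1) (addcol (b - 1) f)"
proof
  fix k show "addcol b (addcol a f) k = addcol (a + 1) (addcol (b - 1) f) k"
  proof (cases k)
    case 0 then show ?thesis by (simp add: addcol_def)
  next
    case (Suc j) note kj = Suc
    show ?thesis
    proof (cases j)
      case 0 then show ?thesis using kj by (simp add: addcol_def algebra_simps)
    next
      case (Suc i) then show ?thesis using kj by (simp add: addcol_def algebra_simps)
    qed
  qed
qed

lemma addcol0_delta: "addcol 0 delta = delta"
  by (rule ext) (simp add: addcol_def delta_def)

fun pairs :: "int \<Rightarrow> nat \<Rightarrow> nat \<Rightarrow> int" where
  "pairs a 0 = delta"
| "pairs a (Suc n) = addcol (a + 2 * int n) (addcol (a + 2 * int n) (pairs a n))"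

fun qq :: "nat \<Rightarrow> nat \<Rightarrow> int" where
  "qq 0 = delta"
| "qq (Suc j) = addcol (2 * int j + 2) (addcol (2 * int j) (qq j))"

lemma pairs1_qq: "pairs 1 t = qq t"
proof (induction t)
  case 0 then show ?case by simp
next
  case (Suc t)
  have "addcol (1 + 2 * int t) (addcol (1 + 2 * int t) (qq t))
      = addcol ((1 + 2 * int t) + 1) (addcol ((1 + 2 * int t) - 1) (qq t))"
    by (rule addcol_swap)
  then show ?case using Suc by (simp add: algebra_simps)
qed

lemma qq_pairs2: "addcol (2 * int j) (qq j) = pairs 2 j"
proof (induction j)
  case 0 then show ?case by (simp add: addcol0_delta)
next
  case (Suc j)
  then show ?case by (simp add: algebra_simps)
qed

lemma L1: "pairs 1 (Suc t) = addcol (2 * int t + 2) (pairs 2 t)"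
proof -
  have "pairs 1 (Suc t) = qq (Suc t)" by (rule pairs1_qq)
  also have "\<dots> = addcol (2 * int t + 2) (pairs 2 t)" using qq_pairs2[of t] by simp
  finally show ?thesis .
qed

lemma L2: "addcol (2 * int t) (pairs 1 t) = pairs 2 t"
  by (simp add: pairs1_qq qq_pairs2)

definition dd :: "nat \<times> nat \<Rightarrow> int" where "dd p = int (fst p) - int (snd p)"
definition ss :: "nat \<times> nat \<Rightarrow> nat" where "ss p = fst p + snd p"

lemma dd_ss_inj: "dd p = dd q \<Longrightarrow> ss p = ss q \<Longrightarrow> p = q"
  by (cases p; cases q) (auto simp: dd_def ss_def)

lemma nonatt_iff: "nonattacking A \<longleftrightarrow> (\<forall>p\<in>A. \<forall>q\<in>A. p \<noteq> q \<longrightarrow> dd p \<noteq> dd q \<and> ss p \<noteq> ss q)"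
  unfolding nonattacking_def common_diag_def dd_def ss_def by blast

definition NA :: "(nat \<times> nat) set \<Rightarrow> nat \<Rightarrow> (nat \<times> nat) set set" where
  "NA X k = {A. A \<subseteq> X \<and> card A = k \<and> nonattacking A}"

definition Fn :: "(nat \<times> nat) set \<Rightarrow> nat \<Rightarrow> int" where
  "Fn X k = int (card (NA X k))"

lemma NA_finite: "finite X \<Longrightarrow> finite (NA X k)"
  by (rule finite_subset[of _ "Pow X"]) (auto simp: NA_def)

lemma NA_0: "finite X \<Longrightarrow> NA X 0 = {{}}"
proof -
  assume f: "finite X"
  { fix A assume "A \<subseteq> X" "card A = 0"
    then have "A = {}" using f finite_subset card_0_eq by metis }
  then have "NA X 0 \<subseteq> {{}}" unfolding NA_def by blast
  moreover have "{} \<in> NA X 0" unfolding NA_def nonattacking_def by simp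
  ultimately show ?thesis by blast
qed

lemma Fn_empty: "Fn {} = delta"
proof
  fix k
  have "NA {} k = (if k = 0 then {{}} else {})" by (auto simp: NA_def nonattacking_def)
  then show "Fn {} k = delta k" by (simp add: Fn_def delta_def)
qed

lemma Fn_0: "finite X \<Longrightarrow> Fn X 0 = 1"
  by (simp add: Fn_def NA_0)

lemma peel:
  assumes fin: "finite X" and D: "D = {p\<in>X. dd p = c}"
    and rows: "\<forall>p\<in>X. \<exists>q\<in>D. ss q = ss p"
  shows "Fn X = addcol (int (card D)) (Fn (X - D))"
proof
  fix k
  show "Fn X k = addcol (int (card D)) (Fn (X - D)) k"
  proof (cases k)
    case 0
    then show ?thesis using fin by (simp add: addcol_def Fn_0)
  next
    case (Suc j)
    let ?Y = "X - D"
    have finY: "finite ?Y" using fin by simp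
    have finD: "finite D" using fin D by simp
    have rowsS: "ss ` B \<subseteq> ss ` D" if "B \<subseteq> X" for B
    proof
      fix x assume "x \<in> ss ` B"
      then obtain a where a: "a \<in> B" "x = ss a" by blast
      then have "a \<in> X" using that by blast
      then obtain q where "q \<in> D" "ss q = ss a" using rows by blast
      then show "x \<in> ss ` D" using a by (metis imageI)
    qed
    define G where "G A' = (\<lambda>q. insert q A') ` {q\<in>D. ss q \<notin> ss ` A'}" for A'
    have split: "NA X (Suc j) = NA ?Y (Suc j) \<union> (\<Union>A'\<in>NA ?Y j. G A')"
    proof (intro equalityI subsetI)
      fix A assume A: "A \<in> NA X (Suc j)"
      show "A \<in> NA ?Y (Suc j) \<union> (\<Union>A'\<in>NA ?Y j. G A')"
      proof (cases "A \<inter> D = {}")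
        case True
        then show ?thesis using A by (auto simp: NA_def)
      next
        case False
        then obtain q where q: "q \<in> A" "q \<in> D" by blast
        have AX: "A \<subseteq> X" and cA: "card A = Suc j" and na: "nonattacking A"
          using A by (auto simp: NA_def)
        have finA: "finite A" using AX fin finite_subset by blast
        have AD: "A \<inter> D = {q}"
        proof -
          { fix p assume "p \<in> A" "p \<in> D" "p \<noteq> q"
            then have False using na q D unfolding nonatt_iff by auto }
          then show ?thesis using q by blast
        qed
        let ?A' = "A - {q}"
        have "?A' \<in> NA ?Y j"
          using AX cA na AD finA q unfolding NA_def nonatt_iff by auto
        moreover have "A \<in> G ?A'"
        proof -
          have "ss q \<notin> ss ` ?A'" using na q unfolding nonatt_iff by auto
          then have "q \<in> {q\<in>D. ss q \<notin> ss ` ?A'}" using q by simp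
          moreover have "A = insert q ?A'" using q by auto
          ultimately show ?thesis unfolding G_def by blast
        qed
        ultimately show ?thesis by blast
      qed
    next
      fix A assume A: "A \<in> NA ?Y (Suc j) \<union> (\<Union>A'\<in>NA ?Y j. G A')"
      then show "A \<in> NA X (Suc j)"
      proof
        assume "A \<in> NA ?Y (Suc j)" then show ?thesis by (auto simp: NA_def)
      next
        assume "A \<in> (\<Union>A'\<in>NA ?Y j. G A')"
        then obtain A' q where A': "A' \<in> NA ?Y j" and q: "q \<in> D" "ss q \<notin> ss ` A'"
          and Aeq: "A = insert q A'" unfolding G_def by blast
        have finA': "finite A'" using A' finY finite_subset unfolding NA_def by blast
        have qn: "q \<notin> A'" using A' q unfolding NA_def by auto
        have "\<forall>a\<in>A'. dd a \<noteq> dd q" using A' q D unfolding NA_def by auto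
        moreover have "\<forall>a\<in>A'. ss a \<noteq> ss q" proof
          fix a assume "a \<in> A'"
          then have "ss a \<in> ss ` A'" by (rule imageI)
          then show "ss a \<noteq> ss q" using q(2) by metis
        qed
        ultimately have "nonattacking A" using A' Aeq unfolding NA_def nonatt_iff by auto
        moreover have "A \<subseteq> X" using A' q D Aeq unfolding NA_def by auto
        moreover have "card A = Suc j" using A' Aeq qn finA' unfolding NA_def by simp
        ultimately show ?thesis unfolding NA_def by blast
      qed
    qed
    have inD: "A \<inter> D \<noteq> {}" if "A \<in> G A'" for A A' using that unfolding G_def by auto
    have outD: "A \<inter> D = {}" if "A \<in> NA ?Y k'" for A k' using that unfolding NA_def by auto
    have disj1: "NA ?Y (Suc j) \<inter> (\<Union>A'\<in>NA ?Y j. G A') = {}"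
      using inD outD by blast
    have disj2: "\<forall>A1\<in>NA ?Y j. \<forall>A2\<in>NA ?Y j. A1 \<noteq> A2 \<longrightarrow> G A1 \<inter> G A2 = {}"
    proof (intro ballI impI)
      fix A1 A2 assume A1: "A1 \<in> NA ?Y j" and A2: "A2 \<in> NA ?Y j" and ne: "A1 \<noteq> A2"
      show "G A1 \<inter> G A2 = {}"
      proof (rule ccontr)
        assume "G A1 \<inter> G A2 \<noteq> {}"
        then obtain q1 q2 where q12: "q1 \<in> D" "q2 \<in> D" and eq: "insert q1 A1 = insert q2 A2"
          unfolding G_def by blast
        have o1: "A1 \<inter> D = {}" using outD A1 by blast
        have o2: "A2 \<inter> D = {}" using outD A2 by blast
        have "A1 = insert q1 A1 - D" using o1 q12 by auto
        also have "\<dots> = insert q2 A2 - D" using eq by simp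
        also have "\<dots> = A2" using o2 q12 by auto
        finally have "A1 = A2" .
        then show False using ne by simp
      qed
    qed
    have cardG: "card (G A') = card D - j" if A': "A' \<in> NA ?Y j" for A'
    proof -
      have A'Y: "A' \<subseteq> ?Y" and cA': "card A' = j" and na': "nonattacking A'"
        using A' unfolding NA_def by auto
      have finA': "finite A'" using A'Y finY finite_subset by blast
      have inj1: "inj_on (\<lambda>q. insert q A') {q\<in>D. ss q \<notin> ss ` A'}"
      proof (rule inj_onI)
        fix x y assume "x \<in> {q\<in>D. ss q \<notin> ss ` A'}" "y \<in> {q\<in>D. ss q \<notin> ss ` A'}"
          "insert x A' = insert y A'"
        moreover have "x \<notin> A'" "y \<notin> A'" using calculation A'Y by auto
        ultimately show "x = y" by blast
      qed
      have injD: "inj_on ss D"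
      proof (rule inj_onI)
        fix x y assume "x \<in> D" "y \<in> D" "ss x = ss y"
        then show "x = y" using D dd_ss_inj by auto
      qed
      have injA: "inj_on ss A'"
      proof (rule inj_onI)
        fix x y assume "x \<in> A'" "y \<in> A'" "ss x = ss y"
        then show "x = y" using na' unfolding nonatt_iff by blast
      qed
      have "card (G A') = card {q\<in>D. ss q \<notin> ss ` A'}"
        unfolding G_def using inj1 by (rule card_image)
      also have "\<dots> = card (ss ` {q\<in>D. ss q \<notin> ss ` A'})"
        using injD by (auto intro: card_image[symmetric] inj_on_subset)
      also have "ss ` {q\<in>D. ss q \<notin> ss ` A'} = ss ` D - ss ` A'" by auto
      also have "card (ss ` D - ss ` A') = card (ss ` D) - card (ss ` A')"
      proof (rule card_Diff_subset)
        show "finite (ss ` A')" using finA' by simp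
        show "ss ` A' \<subseteq> ss ` D" using rowsS A'Y by blast
      qed
      also have "card (ss ` D) = card D" using injD by (rule card_image)
      also have "card (ss ` A') = j" using injA cA' card_image by metis
      finally show ?thesis .
    qed
    have cardle: "j \<le> card D" if A': "A' \<in> NA ?Y j" for A'
    proof -
      have A'Y: "A' \<subseteq> ?Y" and cA': "card A' = j" and na': "nonattacking A'"
        using A' unfolding NA_def by auto
      have finA': "finite A'" using A'Y finY finite_subset by blast
      have injA: "inj_on ss A'"
      proof (rule inj_onI)
        fix x y assume "x \<in> A'" "y \<in> A'" "ss x = ss y"
        then show "x = y" using na' unfolding nonatt_iff by blast
      qed
      have "card (ss ` A') \<le> card (ss ` D)"
        using rowsS A'Y finD by (intro card_mono) auto
      also have "\<dots> \<le> card D" by (rule card_image_le[OF finD])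
      finally show ?thesis using injA cA' card_image by metis
    qed
    have finG: "finite (G A')" for A' unfolding G_def using finD by simp
    have "card (NA X (Suc j)) = card (NA ?Y (Suc j)) + card (\<Union>A'\<in>NA ?Y j. G A')"
      unfolding split using disj1 NA_finite[OF finY] finG
      by (intro card_Un_disjoint) auto
    also have "card (\<Union>A'\<in>NA ?Y j. G A') = (\<Sum>A'\<in>NA ?Y j. card (G A'))"
      using disj2 NA_finite[OF finY] finG by (intro card_UN_disjoint) auto
    finally have "int (card (NA X (Suc j))) = int (card (NA ?Y (Suc j))) + (\<Sum>A'\<in>NA ?Y j. int (card D - j))"
      using cardG by simp
    also have "(\<Sum>A'\<in>NA ?Y j. int (card D - j)) = (\<Sum>A'\<in>NA ?Y j. int (card D) - int j)"
      using cardle by (intro sum.cong) auto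
    also have "\<dots> = int (card (NA ?Y j)) * (int (card D) - int j)" by simp
    finally show ?thesis using Suc by (simp add: Fn_def addcol_def algebra_simps)
  qed
qed

definition clsq :: "nat \<Rightarrow> nat \<Rightarrow> (nat \<times> nat) set" where
  "clsq m q = {p \<in> board m. ss p mod 2 = q}"

lemma white_clsq: "white m = clsq m 0"
  unfolding white_def clsq_def ss_def by auto

lemma black_clsq: "black m = clsq m 1"
proof (rule set_eqI)
  fix x :: "nat \<times> nat"
  obtain a b where x: "x = (a, b)" by (cases x)
  have "odd (a + b) \<longleftrightarrow> (a + b) mod 2 = 1" by presburger
  then show "x \<in> black m \<longleftrightarrow> x \<in> clsq m 1" unfolding x black_def clsq_def ss_def by simp
qed

lemma clsq_finite: "finite (clsq m q)"
  unfolding clsq_def board_def by simp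

definition SX :: "(nat \<times> nat) set \<Rightarrow> int \<Rightarrow> (nat \<times> nat) set" where
  "SX X e = {p\<in>X. e \<le> \<bar>dd p\<bar>}"

lemma clsq_mem: "(a, b) \<in> clsq m q \<longleftrightarrow> 1 \<le> a \<and> a \<le> m \<and> 1 \<le> b \<and> b \<le> m \<and> (a + b) mod 2 = q"
  unfolding clsq_def board_def ss_def by auto

lemma dd_lt: "p \<in> clsq m q \<Longrightarrow> \<bar>dd p\<bar> < int m"
  by (cases p) (auto simp: clsq_mem dd_def)

lemma dd_par: "p \<in> clsq m q \<Longrightarrow> dd p mod 2 = int q"
  by (cases p) (auto simp: clsq_mem dd_def, presburger)

lemma SX_empty: "int m \<le> e \<Longrightarrow> SX (clsq m q) e = {}"
  using dd_lt unfolding SX_def by fastforce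

lemma col_card:
  assumes "\<bar>c\<bar> < int m" "c mod 2 = int q"
  shows "card {p\<in>clsq m q. dd p = c} = m - nat \<bar>c\<bar>"
proof (cases "c \<ge> 0")
  case True
  define n where "n = nat c"
  have "{p\<in>clsq m q. dd p = c} = (\<lambda>j. (j + n, j)) ` {1..m - n}"
  proof (intro equalityI subsetI)
    fix p assume "p \<in> {p\<in>clsq m q. dd p = c}"
    then obtain a b where p: "p = (a, b)" "(a, b) \<in> clsq m q" "int a - int b = c"
      by (cases p) (auto simp: dd_def)
    then have "a = b + n" using True n_def by auto
    then show "p \<in> (\<lambda>j. (j + n, j)) ` {1..m - n}" using p by (auto simp: clsq_mem)
  next
    fix p assume "p \<in> (\<lambda>j. (j + n, j)) ` {1..m - n}"
    then obtain j where j: "p = (j + n, j)" "1 \<le> j" "j \<le> m - n" by auto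
    have "n < m" using assms True n_def by auto
    have cn: "int n = c" using True n_def by simp
    moreover have "(j + n + j) mod 2 = q" using assms(2) cn by presburger
    ultimately show "p \<in> {p\<in>clsq m q. dd p = c}" using j True n_def
      by (auto simp: clsq_mem dd_def)
  qed
  moreover have "inj (\<lambda>j. (j + n, j))" by (auto intro: injI)
  ultimately show ?thesis using True n_def by (simp add: card_image inj_on_subset)
next
  case False
  define n where "n = nat (- c)"
  have "{p\<in>clsq m q. dd p = c} = (\<lambda>j. (j, j + n)) ` {1..m - n}"
  proof (intro equalityI subsetI)
    fix p assume "p \<in> {p\<in>clsq m q. dd p = c}"
    then obtain a b where p: "p = (a, b)" "(a, b) \<in> clsq m q" "int a - int b = c"
      by (cases p) (auto simp: dd_def)
    then have "b = a + n" using False n_def by auto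
    then show "p \<in> (\<lambda>j. (j, j + n)) ` {1..m - n}" using p by (auto simp: clsq_mem)
  next
    fix p assume "p \<in> (\<lambda>j. (j, j + n)) ` {1..m - n}"
    then obtain j where j: "p = (j, j + n)" "1 \<le> j" "j \<le> m - n" by auto
    have "n < m" using assms False n_def by auto
    have cn: "int n = - c" using False n_def by simp
    moreover have "(j + (j + n)) mod 2 = q" using assms(2) cn by presburger
    ultimately show "p \<in> {p\<in>clsq m q. dd p = c}" using j False n_def
      by (auto simp: clsq_mem dd_def)
  qed
  moreover have "inj (\<lambda>j. (j, j + n))" by (auto intro: injI)
  ultimately show ?thesis using False n_def by (simp add: card_image inj_on_subset)
qed

lemma rows_lem:
  assumes p: "p \<in> clsq m q" and le: "\<bar>c\<bar> \<le> \<bar>dd p\<bar>" and par: "c mod 2 = int q"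
  shows "\<exists>r\<in>clsq m q. dd r = c \<and> ss r = ss p"
proof -
  obtain a b where ab: "p = (a, b)" by (cases p)
  have A: "1 \<le> a" "a \<le> m" "1 \<le> b" "b \<le> m" "(a + b) mod 2 = q" using p ab by (auto simp: clsq_mem)
  have L: "\<bar>c\<bar> \<le> \<bar>int a - int b\<bar>" using le ab by (simp add: dd_def)
  define x where "x = nat ((int a + int b + c) div 2)"
  define y where "y = nat ((int a + int b - c) div 2)"
  have ev: "(int a + int b + c) mod 2 = 0" using A par by presburger
  have x: "int x = (int a + int b + c) div 2" using L unfolding x_def by (simp add: abs_if split: if_splits)
  have y: "int y = (int a + int b - c) div 2" using L unfolding y_def by (simp add: abs_if split: if_splits)
  have xy: "int x + int y = int a + int b" "int x - int y = c" using x y ev by presburger+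
  have "1 \<le> x" "x \<le> m" "1 \<le> y" "y \<le> m" using xy A L by (simp_all add: abs_if split: if_splits)
  moreover have "(x + y) mod 2 = q" using xy A
    by (metis of_nat_add of_nat_eq_iff)
  ultimately have "(x, y) \<in> clsq m q" by (simp add: clsq_mem)
  moreover have "dd (x, y) = c" "ss (x, y) = ss p" using xy ab by (auto simp: dd_def ss_def)
  ultimately show ?thesis by blast
qed

lemma chain:
  assumes q1: "q \<le> 1" and a: "1 \<le> a" "a \<le> 2"
  shows "\<forall>e. 1 \<le> e \<longrightarrow> e mod 2 = int q \<longrightarrow> int m - e + 2 = a + 2 * int n
           \<longrightarrow> Fn (SX (clsq m q) e) = pairs a n"
proof (induction n)
  case 0
  show ?case
  proof (intro allI impI)
    fix e :: int assume "1 \<le> e" "e mod 2 = int q" "int m - e + 2 = a + 2 * int 0"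
    then have "int m \<le> e" using a by simp
    then show "Fn (SX (clsq m q) e) = pairs a 0" by (simp add: SX_empty Fn_empty)
  qed
next
  case (Suc n)
  show ?case
  proof (intro allI impI)
    fix e :: int assume e1: "1 \<le> e" and ep: "e mod 2 = int q" and em: "int m - e + 2 = a + 2 * int (Suc n)"
    let ?X = "clsq m q"
    have elt: "e < int m" using em a by simp
    have fin: "finite (SX ?X e)" using clsq_finite unfolding SX_def by simp
    define D1 where "D1 = {p\<in>SX ?X e. dd p = e}"
    have D1': "D1 = {p\<in>?X. dd p = e}" unfolding D1_def SX_def using e1 by auto
    have cD1: "int (card D1) = a + 2 * int n"
      unfolding D1' using col_card[of e m q] elt e1 ep em by simp
    have rows1: "\<forall>p\<in>SX ?X e. \<exists>r\<in>D1. ss r = ss p"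
    proof
      fix p assume p: "p \<in> SX ?X e"
      then have "p \<in> ?X" "\<bar>e\<bar> \<le> \<bar>dd p\<bar>" using e1 unfolding SX_def by auto
      then obtain r where "r \<in> ?X" "dd r = e" "ss r = ss p" using rows_lem ep by blast
      moreover have "e \<le> \<bar>dd r\<bar>" using calculation by simp
      ultimately show "\<exists>r\<in>D1. ss r = ss p" unfolding D1_def SX_def by blast
    qed
    have step1: "Fn (SX ?X e) = addcol (a + 2 * int n) (Fn (SX ?X e - D1))"
      using peel[OF fin D1_def rows1] cD1 by simp
    define T where "T = SX ?X e - D1"
    have finT: "finite T" using fin unfolding T_def by simp
    define D2 where "D2 = {p\<in>T. dd p = - e}"
    have D2': "D2 = {p\<in>?X. dd p = - e}" unfolding D2_def T_def D1_def SX_def using e1 by auto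
    have ep2: "(- e) mod 2 = int q" using ep q1 by presburger
    have cD2: "int (card D2) = a + 2 * int n"
      unfolding D2' using col_card[of "- e" m q] elt e1 ep2 em by simp
    have rows2: "\<forall>p\<in>T. \<exists>r\<in>D2. ss r = ss p"
    proof
      fix p assume p: "p \<in> T"
      then have "p \<in> ?X" "\<bar>- e\<bar> \<le> \<bar>dd p\<bar>" using e1 unfolding T_def SX_def by auto
      then obtain r where "r \<in> ?X" "dd r = - e" "ss r = ss p" using rows_lem ep2 by blast
      moreover have "r \<notin> D1" using calculation e1 unfolding D1_def by auto
      moreover have "e \<le> \<bar>dd r\<bar>" using calculation by simp
      ultimately show "\<exists>r\<in>D2. ss r = ss p" unfolding D2_def T_def SX_def by blast
    qed
    have step2: "Fn T = addcol (a + 2 * int n) (Fn (T - D2))"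
      using peel[OF finT D2_def rows2] cD2 by simp
    have TD: "T - D2 = SX ?X (e + 2)"
    proof (intro equalityI subsetI)
      fix p assume p: "p \<in> T - D2"
      then have "p \<in> ?X" "e \<le> \<bar>dd p\<bar>" "dd p \<noteq> e" "dd p \<noteq> - e"
        unfolding T_def D1_def D2_def SX_def by auto
      moreover have "dd p mod 2 = int q" using calculation(1) by (rule dd_par)
      ultimately have "e + 2 \<le> \<bar>dd p\<bar>" using ep by (simp add: abs_if split: if_splits; presburger)
      then show "p \<in> SX ?X (e + 2)" using \<open>p \<in> ?X\<close> unfolding SX_def by auto
    next
      fix p assume "p \<in> SX ?X (e + 2)"
      then show "p \<in> T - D2" using e1 unfolding T_def D1_def D2_def SX_def by (auto simp: abs_if)
    qed
    have IH: "Fn (SX ?X (e + 2)) = pairs a n"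
      using Suc.IH e1 ep em by (simp add: algebra_simps; presburger)
    show "Fn (SX ?X e) = pairs a (Suc n)"
      using step1 step2 TD IH unfolding T_def by simp
  qed
qed

lemma white_top:
  assumes m: "1 \<le> m"
  shows "Fn (clsq m 0) = addcol (int m) (Fn (SX (clsq m 0) 2))"
proof -
  let ?X = "clsq m 0"
  define D0 where "D0 = {p\<in>?X. dd p = 0}"
  have c: "int (card D0) = int m" unfolding D0_def using col_card[of 0 m 0] m by simp
  have rows: "\<forall>p\<in>?X. \<exists>r\<in>D0. ss r = ss p"
    using rows_lem[of _ m 0 0] unfolding D0_def by fastforce
  have "?X - D0 = SX ?X 2"
  proof (intro equalityI subsetI)
    fix p assume p: "p \<in> ?X - D0"
    then have "p \<in> ?X" "dd p \<noteq> 0" unfolding D0_def by auto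
    moreover have "dd p mod 2 = 0" using dd_par[OF calculation(1)] by simp
    ultimately have "2 \<le> \<bar>dd p\<bar>" by (simp add: abs_if; presburger)
    then show "p \<in> SX ?X 2" using \<open>p \<in> ?X\<close> unfolding SX_def by auto
  next
    fix p assume "p \<in> SX ?X 2" then show "p \<in> ?X - D0" unfolding SX_def D0_def by auto
  qed
  then show ?thesis using peel[OF clsq_finite D0_def rows] c by simp
qed

lemma FW_odd: "Fn (white (2 * t + 1)) = addcol (2 * int t + 1) (pairs 1 t)"
proof -
  have "Fn (SX (clsq (2 * t + 1) 0) 2) = pairs 1 t"
    using chain[of 0 1 "2 * t + 1" t] by simp
  then show ?thesis unfolding white_clsq using white_top[of "2 * t + 1"] by (simp add: ac_simps)
qed

lemma FW_even: "Fn (white (2 * t)) = pairs 1 t"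
proof (cases t)
  case 0
  have "white 0 = {}" unfolding white_def board_def by auto
  then show ?thesis using 0 by (simp add: Fn_empty)
next
  case (Suc s)
  have "Fn (SX (clsq (2 * s + 2) 0) 2) = pairs 2 s"
    using chain[of 0 2 "2 * s + 2" s] by simp
  then have "Fn (white (2 * s + 2)) = addcol (2 * int s + 2) (pairs 2 s)"
    unfolding white_clsq using white_top[of "2 * s + 2"] by (simp add: ac_simps)
  then show ?thesis using Suc L1[of s] by simp
qed

lemma black_top: "SX (clsq m 1) 1 = clsq m 1"
proof -
  have "1 \<le> \<bar>dd p\<bar>" if "p \<in> clsq m 1" for p
    using dd_par[OF that] by (simp add: abs_if; presburger)
  then show ?thesis unfolding SX_def by auto
qed

lemma FK_even: "Fn (black (2 * t)) = pairs 1 t"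
  using chain[of 1 1 "2 * t" t] black_top[of "2 * t"] unfolding black_clsq by simp

lemma FK_odd: "Fn (black (2 * t + 1)) = pairs 2 t"
  using chain[of 1 2 "2 * t + 1" t] black_top[of "2 * t + 1"] unfolding black_clsq by simp

lemma FW_rec:
  assumes "1 \<le> m"
  shows "Fn (white m) = addcol (int m - 1 + parity m) (Fn (white (m - 1)))"
proof (cases "even m")
  case True
  then obtain t where t: "m = 2 * Suc t" using assms by (metis dvd_def Suc_pred' gr0I mult_0_right not_one_le_zero)
  have "Fn (white m) = pairs 1 (Suc t)" unfolding t by (rule FW_even)
  also have "\<dots> = addcol (2 * int t + 1) (addcol (2 * int t + 1) (pairs 1 t))" by (simp add: add.commute)
  also have "addcol (2 * int t + 1) (pairs 1 t) = Fn (white (m - 1))"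
    using t FW_odd[of t] by simp
  finally show ?thesis using t True by (simp add: parity_def ac_simps)
next
  case False
  then obtain t where t: "m = 2 * t + 1" using oddE by blast
  show ?thesis using t FW_odd[of t] FW_even[of t] by (simp add: parity_def)
qed

lemma FK_rec:
  assumes "1 \<le> m"
  shows "Fn (black m) = addcol (int m - parity m) (Fn (black (m - 1)))"
proof (cases "even m")
  case True
  then obtain t where t: "m = 2 * Suc t" using assms by (metis dvd_def Suc_pred' gr0I mult_0_right not_one_le_zero)
  have "Fn (black m) = pairs 1 (Suc t)" unfolding t by (rule FK_even)
  also have "\<dots> = addcol (2 * int t + 2) (pairs 2 t)" by (rule L1)
  also have "pairs 2 t = Fn (black (m - 1))" using t FK_odd[of t] by simp
  finally show ?thesis using t True by (simp add: parity_def ac_simps)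
next
  case False
  then obtain t where t: "m = 2 * t + 1" using oddE by blast
  show ?thesis using t FK_odd[of t] FK_even[of t] L2[of t] by (simp add: parity_def)
qed

definition U :: "nat \<Rightarrow> nat \<Rightarrow> nat \<Rightarrow> nat" where
  "U a b n = (\<Sum>j\<le>a. (a choose j) * Stirling (a + b - j) n)"

lemma U1: "U a (Suc b) (Suc n) = Suc n * U a b (Suc n) + U a b n"
proof -
  have "U a (Suc b) (Suc n) = (\<Sum>j\<le>a. (a choose j) * (Suc n * Stirling (a + b - j) (Suc n) + Stirling (a + b - j) n))"
    unfolding U_def
  proof (intro sum.cong refl)
    fix j assume "j \<in> {..a}"
    then have "a + Suc b - j = Suc (a + b - j)" by auto
    then show "(a choose j) * Stirling (a + Suc b - j) (Suc n) = (a choose j) * (Suc n * Stirling (a + b - j) (Suc n) + Stirling (a + b - j) n)"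
      by simp
  qed
  also have "\<dots> = Suc n * U a b (Suc n) + U a b n"
    unfolding U_def by (simp add: sum.distrib sum_distrib_left algebra_simps)
  finally show ?thesis .
qed

lemma U1z: "U a (Suc b) 0 = 0"
proof -
  have "\<And>j. j \<le> a \<Longrightarrow> a + Suc b - j = Suc (a + b - j)" by auto
  then show ?thesis unfolding U_def by (intro sum.neutral) auto
qed

lemma U2: "U (Suc a) b n = U a (Suc b) n + U a b n"
proof -
  let ?f = "\<lambda>j. Stirling (Suc a + b - j) n"
  have e1: "U (Suc a) b n = (\<Sum>j\<le>Suc a. (Suc a choose j) * ?f j)" unfolding U_def by simp
  have e2: "(\<Sum>j\<le>Suc a. (Suc a choose j) * ?f j) = (Suc a choose 0) * ?f 0 + (\<Sum>j\<le>a. (Suc a choose Suc j) * ?f (Suc j))"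
    by (rule sum.atMost_Suc_shift)
  have e3: "(\<Sum>j\<le>a. (Suc a choose Suc j) * ?f (Suc j))
      = (\<Sum>j\<le>a. (a choose j) * ?f (Suc j)) + (\<Sum>j\<le>a. (a choose Suc j) * ?f (Suc j))"
    by (simp only: binomial_Suc_Suc add_mult_distrib sum.distrib)
  have e4: "(\<Sum>j\<le>a. (a choose j) * ?f (Suc j)) = U a b n"
    unfolding U_def by (intro sum.cong refl) auto
  have e5: "(a choose 0) * ?f 0 + (\<Sum>j\<le>a. (a choose Suc j) * ?f (Suc j)) = (\<Sum>j\<le>Suc a. (a choose j) * ?f j)"
    by (rule sum.atMost_Suc_shift[symmetric])
  have e6: "(\<Sum>j\<le>Suc a. (a choose j) * ?f j) = (\<Sum>j\<le>a. (a choose j) * ?f j)"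
    by (simp only: sum.atMost_Suc binomial_eq_0[OF lessI] mult_0 add_0_right)
  have e7: "(\<Sum>j\<le>a. (a choose j) * ?f j) = U a (Suc b) n" unfolding U_def by (intro sum.cong refl) auto
  have "(Suc a choose 0) * ?f 0 = (a choose 0) * ?f 0" by simp
  then show ?thesis using e1 e2 e3 e4 e5 e6 e7 by linarith
qed

lemma U_top: "U c (M - c) M = 1" if "c \<le> M"
proof -
  have "U c (M - c) M = (\<Sum>j\<le>c. (c choose j) * Stirling (M - j) M)"
    unfolding U_def using that by (intro sum.cong refl) auto
  also have "\<dots> = (\<Sum>j\<in>{0}. (c choose j) * Stirling (M - j) M)"
  proof (rule sum.mono_neutral_right)
    show "\<forall>i\<in>{..c} - {0}. (c choose i) * Stirling (M - i) M = 0"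
      using that by auto
  qed auto
  finally show ?thesis by simp
qed

lemma generic:
  fixes R :: "nat \<Rightarrow> nat \<Rightarrow> nat" and c p :: "nat \<Rightarrow> nat"
  assumes R0: "\<And>m. R m 0 = 1" and R0k: "\<And>k. 0 < k \<Longrightarrow> R 0 k = 0"
    and Rrec: "\<And>m k. 1 \<le> m \<Longrightarrow> 1 \<le> k \<Longrightarrow>
      int (R m k) = int (R (m - 1) k) + (int m - int k + int (p m)) * int (R (m - 1) (k - 1))"
    and c0: "c 0 = 0" and crec: "\<And>m. 1 \<le> m \<Longrightarrow> c m = c (m - 1) + p m"
    and p1: "\<And>m. p m \<le> 1"
  shows "c m \<le> m \<and> (\<forall>k. (k \<le> m \<longrightarrow> R m k = U (c m) (m - c m) (m - k)) \<and> (m < k \<longrightarrow> R m k = 0))"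
proof (induction m)
  case 0
  show ?case using c0 R0 R0k by (auto simp: U_def)
next
  case (Suc m)
  have cS: "c (Suc m) = c m + p (Suc m)" using crec[of "Suc m"] by simp
  have cle: "c m \<le> m" using Suc.IH by blast
  have IH1: "\<And>k. k \<le> m \<Longrightarrow> R m k = U (c m) (m - c m) (m - k)" using Suc.IH by blast
  have IH2: "\<And>k. m < k \<Longrightarrow> R m k = 0" using Suc.IH by blast
  have cSle: "c (Suc m) \<le> Suc m" using cS cle p1[of "Suc m"] by simp
  have main: "R (Suc m) k = U (c (Suc m)) (Suc m - c (Suc m)) (Suc m - k)" if k: "1 \<le> k" "k \<le> Suc m" for k
  proof -
    define n where "n = Suc m - k"
    have rec: "int (R (Suc m) k) = int (R m k) + (int n + 1 + int (p (Suc m)) - 1) * int (R m (k - 1))"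
      using Rrec[of "Suc m" k] k unfolding n_def by (simp add: of_nat_diff)
    have Rk1: "R m (k - 1) = U (c m) (m - c m) n" using IH1[of "k - 1"] k unfolding n_def by simp
    show ?thesis
    proof (cases "p (Suc m) = 0")
      case True
      then have cc: "c (Suc m) = c m" "Suc m - c (Suc m) = Suc (m - c m)" using cS cle by auto
      show ?thesis
      proof (cases n)
        case 0
        then have "k = Suc m" using k n_def by simp
        then have "R m k = 0" using IH2 by simp
        then show ?thesis using rec True 0 cc U1z unfolding n_def by simp
      next
        case (Suc n')
        then have "k \<le> m" "m - k = n'" using k n_def by auto
        then have "R m k = U (c m) (m - c m) n'" using IH1[of k] by simp
        then have "int (R (Suc m) k) = int (U (c m) (m - c m) n') + int n * int (U (c m) (m - c m) n)"
          using rec True Rk1 by simp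
        also have "\<dots> = int (U (c m) (Suc (m - c m)) n)" using U1[of "c m" "m - c m" n'] Suc by (simp add: algebra_simps)
        finally show ?thesis using cc unfolding n_def by simp
      qed
    next
      case False
      then have pp: "p (Suc m) = 1" using p1[of "Suc m"] by simp
      then have cc: "c (Suc m) = Suc (c m)" "Suc m - c (Suc m) = m - c m" using cS cle by auto
      show ?thesis
      proof (cases n)
        case 0
        then have "k = Suc m" using k n_def by simp
        then have "R m k = 0" using IH2 by simp
        then have "int (R (Suc m) k) = int (U (c m) (m - c m) 0)" using rec pp Rk1 0 by simp
        then show ?thesis using cc U2 U1z 0 unfolding n_def by simp
      next
        case (Suc n')
        then have "k \<le> m" "m - k = n'" using k n_def by auto
        then have "R m k = U (c m) (m - c m) n'" using IH1[of k] by simp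
        then have "int (R (Suc m) k) = int (U (c m) (m - c m) n') + (int n + 1) * int (U (c m) (m - c m) n)"
          using rec pp Rk1 by simp
        also have "\<dots> = int (U (Suc (c m)) (m - c m) n)"
          using U1[of "c m" "m - c m" n'] U2[of "c m" "m - c m" n] Suc by (simp add: algebra_simps)
        finally show ?thesis using cc unfolding n_def by simp
      qed
    qed
  qed
  have zero: "R (Suc m) k = 0" if k: "Suc m < k" for k
  proof -
    have "int (R (Suc m) k) = int (R m k) + (int (Suc m) - int k + int (p (Suc m))) * int (R m (k - 1))"
      using Rrec[of "Suc m" k] k by simp
    moreover have "R m k = 0" "R m (k - 1) = 0" using IH2 k by auto
    ultimately show ?thesis by simp
  qed
  have top: "R (Suc m) 0 = U (c (Suc m)) (Suc m - c (Suc m)) (Suc m - 0)"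
    using R0 U_top[OF cSle] by simp
  show ?case
  proof (intro conjI allI impI)
    show "c (Suc m) \<le> Suc m" by (rule cSle)
  next
    fix k assume "k \<le> Suc m"
    then show "R (Suc m) k = U (c (Suc m)) (Suc m - c (Suc m)) (Suc m - k)"
      using main top by (cases "k = 0") auto
  next
    fix k assume "Suc m < k" then show "R (Suc m) k = 0" by (rule zero)
  qed
qed

lemma ceil_half: "nat \<lceil>real m / 2\<rceil> = (m + 1) div 2"
proof (cases "even m")
  case True
  then obtain t where "m = 2 * t" by blast
  then show ?thesis by simp
next
  case False
  then obtain t where t: "m = 2 * t + 1" using oddE by blast
  have "\<lceil>real m / 2\<rceil> = int t + 1"
    unfolding ceiling_eq_iff t by simp
  then show ?thesis using t by simp
qed

lemma floor_half: "nat \<lfloor>real m / 2\<rfloor> = m div 2"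
proof -
  have "\<lfloor>real m / 2\<rfloor> = int (m div 2)"
    using floor_divide_of_nat_eq[of m 2] by simp
  then show ?thesis by simp
qed

lemma sum_conv:
  assumes "c \<le> m" "k \<le> m"
  shows "(\<Sum>j = 0..k. int (c choose j) * ext_Stirling (int m - int j) (int m - int k)) = int (U c (m - c) (m - k))"
proof -
  have "(\<Sum>j = 0..k. int (c choose j) * ext_Stirling (int m - int j) (int m - int k))
      = (\<Sum>j = 0..k. int ((c choose j) * Stirling (m - j) (m - k)))"
  proof (intro sum.cong refl)
    fix j assume "j \<in> {0..k}"
    then have "j \<le> m" using assms by auto
    then have "ext_Stirling (int m - int j) (int m - int k) = int (Stirling (m - j) (m - k))"
      using assms unfolding ext_Stirling_def by (simp add: nat_diff_distrib' of_nat_diff)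
    then show "int (c choose j) * ext_Stirling (int m - int j) (int m - int k) = int ((c choose j) * Stirling (m - j) (m - k))"
      by simp
  qed
  also have "\<dots> = int (\<Sum>j = 0..k. (c choose j) * Stirling (m - j) (m - k))" by simp
  also have "(\<Sum>j = 0..k. (c choose j) * Stirling (m - j) (m - k)) = (\<Sum>j = 0..m. (c choose j) * Stirling (m - j) (m - k))"
    using assms by (intro sum.mono_neutral_left) auto
  also have "\<dots> = (\<Sum>j\<le>c. (c choose j) * Stirling (m - j) (m - k))"
    using assms by (intro sum.mono_neutral_right) auto
  also have "\<dots> = U c (m - c) (m - k)" unfolding U_def using assms by (intro sum.cong refl) auto
  finally show ?thesis .
qed

lemma sum_zero:
  assumes "c \<le> m" "m < k"
  shows "(\<Sum>j = 0..k. int (c choose j) * ext_Stirling (int m - int j) (int m - int k)) = 0"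
proof (intro sum.neutral ballI)
  fix j assume "j \<in> {0..k}"
  show "int (c choose j) * ext_Stirling (int m - int j) (int m - int k) = 0"
  proof (cases "c < j")
    case True then show ?thesis by simp
  next
    case False
    show ?thesis
    proof (cases "j < m")
      case True then show ?thesis using assms unfolding ext_Stirling_def by auto
    next
      case False
      then have "j = m" using \<open>\<not> c < j\<close> assms by auto
      moreover have "nat (int k - int m) > 0" using assms by simp
      ultimately show ?thesis using assms unfolding ext_Stirling_def by simp
    qed
  qed
qed

lemma RW_Fn: "int (RW m k) = Fn (white m) k" unfolding RW_def Fn_def NA_def by simp
lemma RK_Fn: "int (RK m k) = Fn (black m) k" unfolding RK_def Fn_def NA_def by simp

lemma fin_white: "finite (white m)" unfolding white_clsq by (rule clsq_finite)
lemma fin_black: "finite (black m)" unfolding black_clsq by (rule clsq_finite)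

lemma RW_rec: "1 \<le> m \<Longrightarrow> 1 \<le> k \<Longrightarrow> int (RW m k) = int (RW (m - 1) k)
              + (int m - int k + parity m) * int (RW (m - 1) (k - 1))"
  unfolding RW_Fn using FW_rec[of m] by (simp add: addcol_def algebra_simps)

lemma RK_rec: "1 \<le> m \<Longrightarrow> 1 \<le> k \<Longrightarrow> int (RK m k) = int (RK (m - 1) k)
              + (int m - int k + 1 - parity m) * int (RK (m - 1) (k - 1))"
  unfolding RK_Fn using FK_rec[of m] by (simp add: addcol_def algebra_simps)

lemma RW_0: "RW m 0 = 1" using RW_Fn[of m 0] Fn_0[OF fin_white] by simp
lemma RK_0: "RK m 0 = 1" using RK_Fn[of m 0] Fn_0[OF fin_black] by simp

lemma board0: "board 0 = {}" unfolding board_def by simp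

lemma RW_0k: "RW 0 k = (if k = 0 then 1 else 0)"
proof -
  have "white 0 = {}" unfolding white_def board0 by simp
  then have "int (RW 0 k) = (if k = 0 then 1 else 0)" using RW_Fn[of 0 k] Fn_empty by (simp add: delta_def)
  then show ?thesis by (cases "k = 0") auto
qed

lemma RK_0k: "RK 0 k = (if k = 0 then 1 else 0)"
proof -
  have "black 0 = {}" unfolding black_def board0 by simp
  then have "int (RK 0 k) = (if k = 0 then 1 else 0)" using RK_Fn[of 0 k] Fn_empty by (simp add: delta_def)
  then show ?thesis by (cases "k = 0") auto
qed

definition pW :: "nat \<Rightarrow> nat" where "pW m = (if odd m then 1 else 0)"
definition pK :: "nat \<Rightarrow> nat" where "pK m = (if odd m then 0 else 1)"

lemma RW_U: "(k \<le> m \<longrightarrow> RW m k = U ((m + 1) div 2) (m - (m + 1) div 2) (m - k)) \<and> (m < k \<longrightarrow> RW m k = 0)"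
proof -
  have "(m + 1) div 2 \<le> m \<and> (\<forall>k. (k \<le> m \<longrightarrow> RW m k = U ((m + 1) div 2) (m - (m + 1) div 2) (m - k)) \<and> (m < k \<longrightarrow> RW m k = 0))"
  proof (rule generic[where p = pW])
    show "\<And>m. RW m 0 = 1" by (rule RW_0)
    show "\<And>k. 0 < k \<Longrightarrow> RW 0 k = 0" using RW_0k by simp
    show "int (RW m k) = int (RW (m - 1) k) + (int m - int k + int (pW m)) * int (RW (m - 1) (k - 1))"
      if "1 \<le> m" "1 \<le> k" for m k using RW_rec[OF that] by (simp add: pW_def parity_def)
    show "(0 + 1) div 2 = (0::nat)" by simp
    show "(m + 1) div 2 = (m - 1 + 1) div 2 + pW m" if "1 \<le> m" for m
      using that unfolding pW_def by presburger
    show "pW m \<le> 1" for m by (simp add: pW_def)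
  qed
  then show ?thesis by blast
qed

lemma RK_U: "(k \<le> m \<longrightarrow> RK m k = U (m div 2) (m - m div 2) (m - k)) \<and> (m < k \<longrightarrow> RK m k = 0)"
proof -
  have "m div 2 \<le> m \<and> (\<forall>k. (k \<le> m \<longrightarrow> RK m k = U (m div 2) (m - m div 2) (m - k)) \<and> (m < k \<longrightarrow> RK m k = 0))"
  proof (rule generic[where p = pK])
    show "\<And>m. RK m 0 = 1" by (rule RK_0)
    show "\<And>k. 0 < k \<Longrightarrow> RK 0 k = 0" using RK_0k by simp
    show "int (RK m k) = int (RK (m - 1) k) + (int m - int k + int (pK m)) * int (RK (m - 1) (k - 1))"
      if "1 \<le> m" "1 \<le> k" for m k using RK_rec[OF that] by (simp add: pK_def parity_def)
    show "0 div 2 = (0::nat)" by simp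
    show "m div 2 = (m - 1) div 2 + pK m" if "1 \<le> m" for m
      using that unfolding pK_def by presburger
    show "pK m \<le> 1" for m by (simp add: pK_def)
  qed
  then show ?thesis by blast
qed

theorem theorem2p2:
  shows "(\<forall>m k. 1 \<le> m \<longrightarrow> 1 \<le> k \<longrightarrow>
            int (RW m k) = int (RW (m - 1) k)
              + (int m - int k + parity m) * int (RW (m - 1) (k - 1)))
       \<and> (\<forall>m k. 1 \<le> m \<longrightarrow> 1 \<le> k \<longrightarrow>
            int (RK m k) = int (RK (m - 1) k)
              + (int m - int k + 1 - parity m) * int (RK (m - 1) (k - 1)))
       \<and> (\<forall>m. RW m 0 = 1 \<and> RK m 0 = 1)
       \<and> (\<forall>k. RW 0 k = (if k = 0 then 1 else 0) \<and> RK 0 k = (if k = 0 then 1 else 0))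
       \<and> (\<forall>m k. int (RW m k) =
            (\<Sum>j = 0..k. int (nat \<lceil>real m / 2\<rceil> choose j)
                * ext_Stirling (int m - int j) (int m - int k)))
       \<and> (\<forall>m k. int (RK m k) =
            (\<Sum>j = 0..k. int (nat \<lfloor>real m / 2\<rfloor> choose j)
                * ext_Stirling (int m - int j) (int m - int k)))"
proof (intro conjI allI impI)
  fix m k :: nat assume "1 \<le> m" "1 \<le> k"
  then show "int (RW m k) = int (RW (m - 1) k) + (int m - int k + parity m) * int (RW (m - 1) (k - 1))"
    by (rule RW_rec)
next
  fix m k :: nat assume "1 \<le> m" "1 \<le> k"
  then show "int (RK m k) = int (RK (m - 1) k) + (int m - int k + 1 - parity m) * int (RK (m - 1) (k - 1))"
    by (rule RK_rec)
next
  fix m show "RW m 0 = 1" by (rule RW_0)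
next
  fix m show "RK m 0 = 1" by (rule RK_0)
next
  fix k show "RW 0 k = (if k = 0 then 1 else 0)" by (rule RW_0k)
next
  fix k show "RK 0 k = (if k = 0 then 1 else 0)" by (rule RK_0k)
next
  fix m k :: nat
  have c: "(m + 1) div 2 \<le> m" by (cases m) auto
  show "int (RW m k) = (\<Sum>j = 0..k. int (nat \<lceil>real m / 2\<rceil> choose j) * ext_Stirling (int m - int j) (int m - int k))"
  proof (cases "k \<le> m")
    case True then show ?thesis using RW_U[of k m] sum_conv[OF c True] ceil_half[of m] by simp
  next
    case False then show ?thesis using RW_U[of k m] sum_zero[OF c] ceil_half[of m] by simp
  qed
next
  fix m k :: nat
  have c: "m div 2 \<le> m" by simp
  show "int (RK m k) = (\<Sum>j = 0..k. int (nat \<lfloor>real m / 2\<rfloor> choose j) * ext_Stirling (int m - int j) (int m - int k))"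
  proof (cases "k \<le> m")
    case True then show ?thesis using RK_U[of k m] sum_conv[OF c True] floor_half[of m] by simp
  next
    case False then show ?thesis using RK_U[of k m] sum_zero[OF c] floor_half[of m] by simp
  qed
qed

end
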